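(* Let $0<m\le L$ and let $(\alpha,\beta,\gamma)$ be constant parameters. Define $a(\lambda)=\beta-\gamma\alpha\lambda$ and $b(\lambda)=(1+\gamma)\alpha\lambda-(1+\beta)$. The two-step momentum algorithm is stable for all $f\in\mathcal{Q}_m^L$ if and only if (1) $(b(\lambda),a(\lambda))\in\Delta$ for all $\lambda\in[m,L]$, equivalently (2) $(b(\lambda),a(\lambda))\in\Delta$ for $\lambda\in\{m,L\}$. Furthermore, for $\rho\in(0,1)$, the linear convergence rate $\rho$ is achieved for all $f\in\mathcal{Q}_m^L$ if and only if (1) $(b(\lambda),a(\lambda))\in\Delta_\rho$ for all $\lambda\in[m,L]$, equivalently (2) $(b(\lambda),a(\lambda))\in\Delta_\rho$ for $\lambda\in\{m,L\}$. Here $\Delta=\{(b,a):|b|-1<a<1\}$ and $\Delta_\rho=\{(b,a):\rho(|b|-\rho)\le a\le\rho^2\}$.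
   Context: $\mathcal{Q}_m^L$ is the class of quadratic functions $f(x)=\tfrac12x^TQx-q^Tx$ on $\mathbb{R}^n$ with $q\in\mathbb{R}^n$, $Q=Q^T\succ0$ whose largest eigenvalue is $L$ and smallest is $m$; $x^\star$ is the minimizer. The (noiseless) two-step momentum algorithm is $x^{t+2}=x^{t+1}+\beta(x^{t+1}-x^t)-\alpha\nabla f\big(x^{t+1}+\gamma(x^{t+1}-x^t)\big)$; with $\psi^t=[(x^t-x^\star)^T,(x^{t+1}-x^\star)^T]^T$, $\psi^{t+1}=A\psi^t$, $A=\begin{bmatrix}0&I\\-\beta I+\gamma\alpha Q&(1+\beta)I-(1+\gamma)\alpha Q\end{bmatrix}$. The algorithm is stable for all $f\in\mathcal{Q}_m^L$ if the spectral radius of $A$ is less than $1$ for every $f\in\mathcal{Q}_m^L$; it achieves linear convergence rate $\rho$ for all $f\in\mathcal{Q}_m^L$ if the spectral radius of $A$ is at most $\rho$ for every $f\in\mathcal{Q}_m^L$. *)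

theory Defs
  imports "Jordan_Normal_Form.Spectral_Radius"
begin

definition momentum_matrix :: "nat \<Rightarrow> real \<Rightarrow> real \<Rightarrow> real \<Rightarrow> real mat \<Rightarrow> real mat" where
  "momentum_matrix n \<alpha> \<beta> \<gamma> Q =
     four_block_mat (0\<^sub>m n n) (1\<^sub>m n)
       ((- \<beta>) \<cdot>\<^sub>m 1\<^sub>m n + (\<gamma> * \<alpha>) \<cdot>\<^sub>m Q)
       ((1 + \<beta>) \<cdot>\<^sub>m 1\<^sub>m n - ((1 + \<gamma>) * \<alpha>) \<cdot>\<^sub>m Q)"

text \<open>Q is the Hessian of some f in Q_m^L on R^n: symmetric positive definite,
  largest eigenvalue L, smallest eigenvalue m. (The linear term q does not affect A.)\<close>
definition in_QmL :: "nat \<Rightarrow> real \<Rightarrow> real \<Rightarrow> real mat \<Rightarrow> bool" where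
  "in_QmL n m L Q \<longleftrightarrow> Q \<in> carrier_mat n n \<and> transpose_mat Q = Q \<and>
     (\<forall>x \<in> carrier_vec n. x \<noteq> 0\<^sub>v n \<longrightarrow> x \<bullet> (Q *\<^sub>v x) > 0) \<and>
     eigenvalue Q m \<and> eigenvalue Q L \<and>
     (\<forall>ev. eigenvalue Q ev \<longrightarrow> m \<le> ev \<and> ev \<le> L)"

definition stable_all :: "nat \<Rightarrow> real \<Rightarrow> real \<Rightarrow> real \<Rightarrow> real \<Rightarrow> real \<Rightarrow> bool" where
  "stable_all n m L \<alpha> \<beta> \<gamma> \<longleftrightarrow> (\<forall>Q. in_QmL n m L Q \<longrightarrow>
     spectral_radius (map_mat complex_of_real (momentum_matrix n \<alpha> \<beta> \<gamma> Q)) < 1)"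

definition rate_all :: "nat \<Rightarrow> real \<Rightarrow> real \<Rightarrow> real \<Rightarrow> real \<Rightarrow> real \<Rightarrow> real \<Rightarrow> bool" where
  "rate_all n m L \<alpha> \<beta> \<gamma> \<rho> \<longleftrightarrow> (\<forall>Q. in_QmL n m L Q \<longrightarrow>
     spectral_radius (map_mat complex_of_real (momentum_matrix n \<alpha> \<beta> \<gamma> Q)) \<le> \<rho>)"

definition Delta :: "(real \<times> real) set" where
  "Delta = {(b, a). \<bar>b\<bar> - 1 < a \<and> a < 1}"

definition Delta_rho :: "real \<Rightarrow> (real \<times> real) set" where
  "Delta_rho \<rho> = {(b, a). \<rho> * (\<bar>b\<bar> - \<rho>) \<le> a \<and> a \<le> \<rho>\<^sup>2}"

end

theory Submission
  imports Defs
begin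


lemma smult_mat_mult_vec_c:
  fixes A :: "complex mat"
  assumes "A \<in> carrier_mat n n" "u \<in> carrier_vec n"
  shows "(k \<cdot>\<^sub>m A) *\<^sub>v u = k \<cdot>\<^sub>v (A *\<^sub>v u)"
  using assms by (intro eq_vecI) (auto simp: scalar_prod_def sum_distrib_left ac_simps)

lemma Mc_eq:
  assumes Q: "Q \<in> carrier_mat n n"
  shows "map_mat complex_of_real (momentum_matrix n \<alpha> \<beta> \<gamma> Q) =
    four_block_mat (0\<^sub>m n n) (1\<^sub>m n)
       (of_real (- \<beta>) \<cdot>\<^sub>m 1\<^sub>m n + of_real (\<gamma> * \<alpha>) \<cdot>\<^sub>m map_mat complex_of_real Q)
       (of_real (1 + \<beta>) \<cdot>\<^sub>m 1\<^sub>m n - of_real ((1 + \<gamma>) * \<alpha>) \<cdot>\<^sub>m map_mat complex_of_real Q)"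
  using Q unfolding momentum_matrix_def
  by (intro eq_matI) (auto simp: index_mat_four_block)

lemma Mc_mult:
  fixes u v :: "complex vec"
  assumes Q: "Q \<in> carrier_mat n n" and u: "u \<in> carrier_vec n" and v: "v \<in> carrier_vec n"
  shows "map_mat complex_of_real (momentum_matrix n \<alpha> \<beta> \<gamma> Q) *\<^sub>v (u @\<^sub>v v) =
     v @\<^sub>v (of_real (- \<beta>) \<cdot>\<^sub>v u + of_real (\<gamma> * \<alpha>) \<cdot>\<^sub>v (map_mat complex_of_real Q *\<^sub>v u)
        + (of_real (1 + \<beta>) \<cdot>\<^sub>v v - of_real ((1 + \<gamma>) * \<alpha>) \<cdot>\<^sub>v (map_mat complex_of_real Q *\<^sub>v v)))"
proof -
  let ?Qc = "map_mat complex_of_real Q"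
  have Qc: "?Qc \<in> carrier_mat n n" using Q by simp
  have I: "1\<^sub>m n \<in> carrier_mat n n" by simp
  have e1: "(c1 \<cdot>\<^sub>m 1\<^sub>m n + c2 \<cdot>\<^sub>m ?Qc) *\<^sub>v w = c1 \<cdot>\<^sub>v w + c2 \<cdot>\<^sub>v (?Qc *\<^sub>v w)"
    if w: "w \<in> carrier_vec n" for c1 c2 w
    using w Qc by (subst add_mult_distrib_mat_vec[of _ n n]) (auto simp: smult_mat_mult_vec_c)
  have e2: "(c1 \<cdot>\<^sub>m 1\<^sub>m n - c2 \<cdot>\<^sub>m ?Qc) *\<^sub>v w = c1 \<cdot>\<^sub>v w - c2 \<cdot>\<^sub>v (?Qc *\<^sub>v w)"
    if w: "w \<in> carrier_vec n" for c1 c2 w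
    using w Qc by (subst minus_mult_distrib_mat_vec[of _ n n]) (auto simp: smult_mat_mult_vec_c)
  show ?thesis
    unfolding Mc_eq[OF Q]
    apply (subst four_block_mat_mult_vec[of _ n n _ n])
    using Q u v Qc
    apply (auto simp: e1 e2)
    done
qed



lemma Qc_index:
  assumes "Q \<in> carrier_mat n n" "u \<in> carrier_vec n" "i < n"
  shows "(map_mat complex_of_real Q *\<^sub>v u) $ i = (\<Sum>j\<in>{0..<n}. of_real (Q $$ (i,j)) * u $ j)"
  using assms by (auto simp: scalar_prod_def)

lemma Q_index:
  assumes "Q \<in> carrier_mat n n" "x \<in> carrier_vec n" "i < n"
  shows "(Q *\<^sub>v x) $ i = (\<Sum>j\<in>{0..<n}. Q $$ (i,j) * x $ j)"
  using assms by (auto simp: scalar_prod_def)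

lemma nonzero_vec_index:
  assumes "u \<in> carrier_vec n" "u \<noteq> 0\<^sub>v n"
  shows "\<exists>i<n. u $ i \<noteq> 0"
  using assms by (metis carrier_vecD eq_vecI index_zero_vec(1) index_zero_vec(2))

lemma herm_real:
  fixes Q :: "real mat" and u :: "complex vec"
  assumes Q: "Q \<in> carrier_mat n n" and sym: "transpose_mat Q = Q"
    and u: "u \<in> carrier_vec n" "u \<noteq> 0\<^sub>v n"
    and ev: "\<And>i. i < n \<Longrightarrow> (map_mat complex_of_real Q *\<^sub>v u) $ i = \<mu> * u $ i"
  shows "\<exists>r. \<mu> = of_real r \<and> eigenvalue Q r"
proof -
  have symij: "Q $$ (i,j) = Q $$ (j,i)" if "i < n" "j < n" for i j
    using sym that Q by (metis carrier_matD index_transpose_mat(1))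
  have evs: "(\<Sum>j\<in>{0..<n}. of_real (Q $$ (i,j)) * u $ j) = \<mu> * u $ i" if "i < n" for i
    using ev[OF that] Qc_index[OF Q u(1) that] by simp
  define S where "S = (\<Sum>i\<in>{0..<n}. cnj (u $ i) * (\<Sum>j\<in>{0..<n}. of_real (Q $$ (i,j)) * u $ j))"
  define N where "N = (\<Sum>i\<in>{0..<n}. (cmod (u $ i))\<^sup>2)"
  have "cnj S = (\<Sum>i\<in>{0..<n}. u $ i * (\<Sum>j\<in>{0..<n}. of_real (Q $$ (i,j)) * cnj (u $ j)))"
    unfolding S_def by (simp add: cnj_sum)
  also have "\<dots> = (\<Sum>i\<in>{0..<n}. \<Sum>j\<in>{0..<n}. u $ i * of_real (Q $$ (i,j)) * cnj (u $ j))"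
    by (simp add: sum_distrib_left mult.assoc)
  also have "\<dots> = (\<Sum>j\<in>{0..<n}. \<Sum>i\<in>{0..<n}. u $ i * of_real (Q $$ (i,j)) * cnj (u $ j))"
    by (rule sum.swap)
  also have "\<dots> = (\<Sum>j\<in>{0..<n}. cnj (u $ j) * (\<Sum>i\<in>{0..<n}. of_real (Q $$ (j,i)) * u $ i))"
    by (auto simp: sum_distrib_left symij intro!: sum.cong)
  also have "\<dots> = S" unfolding S_def ..
  finally have SR: "cnj S = S" .
  have "S = (\<Sum>i\<in>{0..<n}. cnj (u $ i) * (\<mu> * u $ i))"
    unfolding S_def by (auto simp: evs intro!: sum.cong)
  also have "\<dots> = \<mu> * of_real N"
    unfolding N_def of_real_sum sum_distrib_left
  proof (rule sum.cong)
    fix i show "cnj (u $ i) * (\<mu> * u $ i) = \<mu> * of_real ((cmod (u $ i))\<^sup>2)"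
      by (simp only: complex_norm_square mult_ac)
  qed simp
  finally have SN: "S = \<mu> * of_real N" .
  obtain i0 where i0: "i0 < n" "u $ i0 \<noteq> 0" using nonzero_vec_index[OF u] by blast
  have "N \<ge> (cmod (u $ i0))\<^sup>2" unfolding N_def
    by (rule member_le_sum) (use i0 in auto)
  hence Npos: "N > 0" using i0 by (smt (verit) zero_less_norm_iff zero_less_power)
  have "cnj \<mu> * of_real N = \<mu> * of_real N" using SR SN by simp
  hence "cnj \<mu> = \<mu>" using Npos by simp
  hence muR: "\<mu> = of_real (Re \<mu>)" by (metis Reals_cnj_iff complex_is_Real_iff of_real_Re)
  define r where "r = Re \<mu>"
  have muR': "\<mu> = of_real r" using muR r_def by simp
  define x where "x = vec n (\<lambda>i. Re (u $ i))"
  define y where "y = vec n (\<lambda>i. Im (u $ i))"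
  have xc: "x \<in> carrier_vec n" "y \<in> carrier_vec n" unfolding x_def y_def by auto
  have Qx: "Q *\<^sub>v x = r \<cdot>\<^sub>v x"
  proof (rule eq_vecI)
    fix i assume "i < dim_vec (r \<cdot>\<^sub>v x)"
    hence i: "i < n" unfolding x_def by simp
    have "(Q *\<^sub>v x) $ i = (\<Sum>j\<in>{0..<n}. Q $$ (i,j) * Re (u $ j))"
      using Q_index[OF Q xc(1) i] unfolding x_def by simp
    also have "\<dots> = Re (\<Sum>j\<in>{0..<n}. of_real (Q $$ (i,j)) * u $ j)"
      by (simp add: Re_sum)
    also have "\<dots> = Re (\<mu> * u $ i)" using evs[OF i] by simp
    also have "\<dots> = r * Re (u $ i)" by (simp add: muR')
    finally show "(Q *\<^sub>v x) $ i = (r \<cdot>\<^sub>v x) $ i" using i unfolding x_def by simp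
  qed (use Q in \<open>auto simp: x_def\<close>)
  have Qy: "Q *\<^sub>v y = r \<cdot>\<^sub>v y"
  proof (rule eq_vecI)
    fix i assume "i < dim_vec (r \<cdot>\<^sub>v y)"
    hence i: "i < n" unfolding y_def by simp
    have "(Q *\<^sub>v y) $ i = (\<Sum>j\<in>{0..<n}. Q $$ (i,j) * Im (u $ j))"
      using Q_index[OF Q xc(2) i] unfolding y_def by simp
    also have "\<dots> = Im (\<Sum>j\<in>{0..<n}. of_real (Q $$ (i,j)) * u $ j)"
      by (simp add: Im_sum)
    also have "\<dots> = Im (\<mu> * u $ i)" using evs[OF i] by simp
    also have "\<dots> = r * Im (u $ i)" by (simp add: muR')
    finally show "(Q *\<^sub>v y) $ i = (r \<cdot>\<^sub>v y) $ i" using i unfolding y_def by simp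
  qed (use Q in \<open>auto simp: y_def\<close>)
  have "x \<noteq> 0\<^sub>v n \<or> y \<noteq> 0\<^sub>v n"
  proof (rule ccontr)
    assume "\<not> ?thesis"
    hence "Re (u $ i0) = 0" "Im (u $ i0) = 0" using i0(1)
      unfolding x_def y_def by (metis index_vec index_zero_vec(1))+
    thus False using i0(2) complex_eqI by auto
  qed
  hence "eigenvalue Q r"
    unfolding eigenvalue_def eigenvector_def using Q xc Qx Qy by auto
  thus ?thesis using muR r_def by blast
qed



lemma smult_append_c: "(z::complex) \<cdot>\<^sub>v (u @\<^sub>v v) = (z \<cdot>\<^sub>v u) @\<^sub>v (z \<cdot>\<^sub>v v)"
  by (intro eq_vecI) auto

lemma eig_M_root:
  assumes Qin: "in_QmL n m L Q"
    and ev: "eigenvalue (map_mat complex_of_real (momentum_matrix n \<alpha> \<beta> \<gamma> Q)) z"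
  shows "\<exists>l. m \<le> l \<and> l \<le> L \<and>
     z^2 + of_real ((1+\<gamma>)*\<alpha>*l - (1+\<beta>)) * z + of_real (\<beta> - \<gamma>*\<alpha>*l) = 0"
proof -
  from Qin have Q: "Q \<in> carrier_mat n n" and sym: "transpose_mat Q = Q"
    and evm: "eigenvalue Q m" and evall: "\<And>e. eigenvalue Q e \<Longrightarrow> m \<le> e \<and> e \<le> L"
    unfolding in_QmL_def by auto
  have mL: "m \<le> L" using evall[OF evm] by simp
  let ?M = "map_mat complex_of_real (momentum_matrix n \<alpha> \<beta> \<gamma> Q)"
  let ?Qc = "map_mat complex_of_real Q"
  have Qc: "?Qc \<in> carrier_mat n n" using Q by simp
  have dimM: "dim_row ?M = n + n" unfolding momentum_matrix_def using Q by simp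
  from ev obtain w where w: "w \<in> carrier_vec (n+n)" "w \<noteq> 0\<^sub>v (n+n)" "?M *\<^sub>v w = z \<cdot>\<^sub>v w"
    unfolding eigenvalue_def eigenvector_def dimM by auto
  define u where "u = vec_first w n"
  define v where "v = vec_last w n"
  have uc: "u \<in> carrier_vec n" and vc: "v \<in> carrier_vec n" unfolding u_def v_def by auto
  have wuv: "w = u @\<^sub>v v" unfolding u_def v_def using w(1) by simp
  define R where "R = of_real (- \<beta>) \<cdot>\<^sub>v u + of_real (\<gamma> * \<alpha>) \<cdot>\<^sub>v (?Qc *\<^sub>v u)
        + (of_real (1 + \<beta>) \<cdot>\<^sub>v v - of_real ((1 + \<gamma>) * \<alpha>) \<cdot>\<^sub>v (?Qc *\<^sub>v v))"
  have "v @\<^sub>v R = (z \<cdot>\<^sub>v u) @\<^sub>v (z \<cdot>\<^sub>v v)"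
    using w(3) Mc_mult[OF Q uc vc, of \<alpha> \<beta> \<gamma>] unfolding wuv R_def smult_append_c by simp
  hence vz: "v = z \<cdot>\<^sub>v u" and Rz: "R = z \<cdot>\<^sub>v v"
    using append_vec_eq[of v n "z \<cdot>\<^sub>v u"] vc uc by auto
  have u0: "u \<noteq> 0\<^sub>v n"
  proof
    assume "u = 0\<^sub>v n"
    hence "w = 0\<^sub>v (n+n)" unfolding wuv vz by (intro eq_vecI) auto
    thus False using w(2) by simp
  qed
  have Qzu: "?Qc *\<^sub>v v = z \<cdot>\<^sub>v (?Qc *\<^sub>v u)" unfolding vz using Qc uc by (simp add: mult_mat_vec)
  define c where "c = of_real \<alpha> * (of_real \<gamma> - (1 + of_real \<gamma>) * z)"
  define p where "p = z^2 - (1 + of_real \<beta>) * z + of_real \<beta>"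
  have key: "c * (?Qc *\<^sub>v u) $ i = p * u $ i" if i: "i < n" for i
  proof -
    have "R $ i = (z \<cdot>\<^sub>v v) $ i" using Rz by simp
    hence "- of_real \<beta> * u $ i + of_real \<gamma> * of_real \<alpha> * (?Qc *\<^sub>v u) $ i
        + ((1 + of_real \<beta>) * (z * u $ i) - (1 + of_real \<gamma>) * of_real \<alpha> * (z * (?Qc *\<^sub>v u) $ i))
        = z * (z * u $ i)"
      unfolding R_def Qzu using i uc vc Qc by (simp add: vz, simp add: algebra_simps)
    thus ?thesis unfolding c_def p_def by (simp add: algebra_simps power2_eq_square)
  qed
  obtain i0 where i0: "i0 < n" "u $ i0 \<noteq> 0" using nonzero_vec_index[OF uc u0] by blast
  show ?thesis
  proof (cases "c = 0")
    case True
    hence "p * u $ i0 = 0" using key[OF i0(1)] by simp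
    hence p0: "p = 0" using i0 by simp
    have "z^2 + of_real ((1+\<gamma>)*\<alpha>*m - (1+\<beta>)) * z + of_real (\<beta> - \<gamma>*\<alpha>*m) = p - of_real m * c"
      unfolding p_def c_def by (simp add: algebra_simps)
    thus ?thesis using True p0 mL by (intro exI[of _ m]) simp
  next
    case False
    have "(?Qc *\<^sub>v u) $ i = (p / c) * u $ i" if "i < n" for i
      using key[OF that] False by (simp add: field_simps)
    from herm_real[OF Q sym uc u0 this] obtain r where r: "p / c = of_real r" "eigenvalue Q r"
      by blast
    have pr: "p = of_real r * c" using r(1) False by (simp add: field_simps)
    have "z^2 + of_real ((1+\<gamma>)*\<alpha>*r - (1+\<beta>)) * z + of_real (\<beta> - \<gamma>*\<alpha>*r) = p - of_real r * c"
      unfolding p_def c_def by (simp add: algebra_simps)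
    thus ?thesis using pr evall[OF r(2)] by (intro exI[of _ r]) simp
  qed
qed

lemma root_eig_M:
  assumes Q: "Q \<in> carrier_mat n n" and x: "x \<in> carrier_vec n" "x \<noteq> 0\<^sub>v n"
    and Qx: "Q *\<^sub>v x = l \<cdot>\<^sub>v x"
    and z: "z^2 + of_real ((1+\<gamma>)*\<alpha>*l - (1+\<beta>)) * z + of_real (\<beta> - \<gamma>*\<alpha>*l) = 0"
  shows "eigenvalue (map_mat complex_of_real (momentum_matrix n \<alpha> \<beta> \<gamma> Q)) z"
proof -
  let ?M = "map_mat complex_of_real (momentum_matrix n \<alpha> \<beta> \<gamma> Q)"
  let ?Qc = "map_mat complex_of_real Q"
  define u where "u = map_vec complex_of_real x"
  have uc: "u \<in> carrier_vec n" unfolding u_def using x by simp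
  have dimM: "dim_row ?M = n + n" unfolding momentum_matrix_def using Q by simp
  have Qu: "?Qc *\<^sub>v u = of_real l \<cdot>\<^sub>v u"
  proof (rule eq_vecI)
    fix i assume "i < dim_vec (of_real l \<cdot>\<^sub>v u)"
    hence i: "i < n" using uc by simp
    have "(?Qc *\<^sub>v u) $ i = of_real (\<Sum>j\<in>{0..<n}. Q $$ (i,j) * x $ j)"
      using Qc_index[OF Q uc i] x unfolding u_def by simp
    also have "\<dots> = of_real ((Q *\<^sub>v x) $ i)" using Q_index[OF Q x(1) i] by simp
    also have "\<dots> = of_real l * u $ i" using Qx i x unfolding u_def by simp
    finally show "(?Qc *\<^sub>v u) $ i = (of_real l \<cdot>\<^sub>v u) $ i" using i uc by simp
  qed (use Q uc in auto)
  have Qzu: "?Qc *\<^sub>v (z \<cdot>\<^sub>v u) = z \<cdot>\<^sub>v (?Qc *\<^sub>v u)" using Q uc by (simp add: mult_mat_vec)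
  have u0: "u \<noteq> 0\<^sub>v n"
  proof
    assume "u = 0\<^sub>v n"
    hence "x = 0\<^sub>v n" unfolding u_def using x(1) by (intro eq_vecI) (auto dest!: arg_cong[of _ _ "\<lambda>v. v $ _"])
    thus False using x(2) by simp
  qed
  define w where "w = u @\<^sub>v (z \<cdot>\<^sub>v u)"
  have wc: "w \<in> carrier_vec (n+n)" unfolding w_def using uc by simp
  have w0: "w \<noteq> 0\<^sub>v (n+n)"
  proof
    assume "w = 0\<^sub>v (n+n)"
    have "u = 0\<^sub>v n"
    proof (rule eq_vecI)
      fix i assume "i < dim_vec (0\<^sub>v n :: complex vec)"
      hence i: "i < n" by simp
      have "w $ i = u $ i" unfolding w_def using i uc by simp
      thus "u $ i = 0\<^sub>v n $ i" using i \<open>w = 0\<^sub>v (n+n)\<close> by simp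
    qed (use uc in simp)
    thus False using u0 by simp
  qed
  have zuc: "z \<cdot>\<^sub>v u \<in> carrier_vec n" using uc by simp
  have "?M *\<^sub>v w = z \<cdot>\<^sub>v w"
    unfolding w_def smult_append_c Mc_mult[OF Q uc zuc] Qzu Qu
  proof (rule arg_cong[of _ _ "\<lambda>t. (z \<cdot>\<^sub>v u) @\<^sub>v t"], rule eq_vecI)
    fix i assume "i < dim_vec (z \<cdot>\<^sub>v (z \<cdot>\<^sub>v u))"
    hence i: "i < n" using uc by simp
    show "(complex_of_real (- \<beta>) \<cdot>\<^sub>v u + complex_of_real (\<gamma> * \<alpha>) \<cdot>\<^sub>v (complex_of_real l \<cdot>\<^sub>v u) +
          (complex_of_real (1 + \<beta>) \<cdot>\<^sub>v (z \<cdot>\<^sub>v u) -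
           complex_of_real ((1 + \<gamma>) * \<alpha>) \<cdot>\<^sub>v (z \<cdot>\<^sub>v (complex_of_real l \<cdot>\<^sub>v u)))) $ i =
          (z \<cdot>\<^sub>v (z \<cdot>\<^sub>v u)) $ i" (is "?a = ?b")
    proof -
      have "?a - ?b = - (z^2 + of_real ((1+\<gamma>)*\<alpha>*l - (1+\<beta>)) * z + of_real (\<beta> - \<gamma>*\<alpha>*l)) * u $ i"
        using i uc by (simp add: algebra_simps power2_eq_square)
      also have "\<dots> = 0" by (simp only: z minus_zero mult_zero_left)
      finally show ?thesis by simp
    qed
  qed (use uc in auto)
  thus ?thesis unfolding eigenvalue_def eigenvector_def dimM using wc w0 by auto
qed



lemma root_parts:
  fixes z :: complex and a b :: real
  assumes "z^2 + of_real b * z + of_real a = 0"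
  shows "(Re z)^2 - (Im z)^2 + b * Re z + a = 0" "(2 * Re z + b) * Im z = 0"
proof -
  have "Re (z^2 + of_real b * z + of_real a) = 0" "Im (z^2 + of_real b * z + of_real a) = 0"
    using assms by simp_all
  thus "(Re z)^2 - (Im z)^2 + b * Re z + a = 0" "(2 * Re z + b) * Im z = 0"
    by (simp_all add: power2_eq_square algebra_simps)
qed

lemma root_cases:
  fixes z :: complex and a b :: real
  assumes "z^2 + of_real b * z + of_real a = 0"
  shows "(Im z \<noteq> 0 \<and> (cmod z)^2 = a \<and> b^2 < 4 * a) \<or> (Im z = 0 \<and> (Re z)^2 + b * Re z + a = 0 \<and> cmod z = \<bar>Re z\<bar>)"
proof (cases "Im z = 0")
  case True
  thus ?thesis using root_parts[OF assms] by (simp add: cmod_def)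
next
  case False
  have x: "Re z = - b / 2" using root_parts(2)[OF assms] False by auto
  have y: "(Im z)^2 = a - b^2/4" using root_parts(1)[OF assms] x by (simp add: power2_eq_square field_simps)
  have "(cmod z)^2 = (Re z)^2 + (Im z)^2" by (simp add: cmod_def)
  also have "\<dots> = a"
  proof -
    have "(Re z)^2 = b^2/4" using x by (simp add: power2_eq_square)
    thus ?thesis using y by simp
  qed
  finally have "(cmod z)^2 = a" .
  moreover have "(Im z)^2 > 0" using False by simp
  ultimately show ?thesis using False y by auto
qed

lemma real_root_is_root:
  fixes r a b :: real
  assumes "r^2 + b * r + a = 0"
  shows "(complex_of_real r)^2 + of_real b * of_real r + of_real a = 0"
proof -
  have "complex_of_real (r^2 + b * r + a) = 0" using assms by simp
  thus ?thesis by simp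
qed

lemma two_roots:
  fixes a b :: real
  obtains "b^2 < 4*a" "(Complex (-b/2) (sqrt (4*a - b^2)/2))^2 + of_real b * Complex (-b/2) (sqrt (4*a - b^2)/2) + of_real a = 0"
  | r1 r2 where "r1^2 + b*r1 + a = 0" "r2^2 + b*r2 + a = 0" "r1 + r2 = -b" "r1 * r2 = a"
proof (cases "b^2 < 4*a")
  case True
  define s where "s = sqrt (4*a - b^2)"
  have s2: "s^2 = 4*a - b^2" unfolding s_def using True by simp
  have "(Complex (-b/2) (s/2))^2 + of_real b * Complex (-b/2) (s/2) + of_real a = 0"
    using s2 by (simp add: complex_eq_iff power2_eq_square field_simps)
  thus ?thesis using that True unfolding s_def by blast
next
  case False
  define s where "s = sqrt (b^2 - 4*a)"
  have s2: "s^2 = b^2 - 4*a" unfolding s_def using False by simp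
  define r1 where "r1 = (-b + s)/2"
  define r2 where "r2 = (-b - s)/2"
  have "r1^2 + b*r1 + a = 0" "r2^2 + b*r2 + a = 0" "r1 + r2 = -b" "r1 * r2 = a"
    unfolding r1_def r2_def using s2 by (simp_all add: power2_eq_square field_simps)
  thus ?thesis using that by blast
qed



lemma real_root_lt:
  fixes x a b :: real
  assumes "x^2 + b*x + a = 0" "\<bar>b\<bar> - 1 < a" "a < 1"
  shows "\<bar>x\<bar> < 1"
proof (rule ccontr)
  assume "\<not> ?thesis"
  hence "x \<ge> 1 \<or> x \<le> -1" by auto
  thus False
  proof
    assume x: "x \<ge> 1"
    have "(x - 1) * (x + 1 + b) \<ge> 0" using x assms by (intro mult_nonneg_nonneg) auto
    moreover have "x^2 + b*x + a = (x - 1) * (x + 1 + b) + (1 + b + a)" by (simp add: algebra_simps power2_eq_square)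
    ultimately show False using assms by linarith
  next
    assume x: "x \<le> -1"
    have "(-x - 1) * (-x + 1 - b) \<ge> 0" using x assms by (intro mult_nonneg_nonneg) auto
    moreover have "x^2 + b*x + a = (-x - 1) * (-x + 1 - b) + (1 - b + a)" by (simp add: algebra_simps power2_eq_square)
    ultimately show False using assms by linarith
  qed
qed

lemma real_root_le:
  fixes x a b \<rho> :: real
  assumes "x^2 + b*x + a = 0" "\<rho> * (\<bar>b\<bar> - \<rho>) \<le> a" "a \<le> \<rho>^2" "\<rho> > 0"
  shows "\<bar>x\<bar> \<le> \<rho>"
proof (rule ccontr)
  assume "\<not> ?thesis"
  hence "x > \<rho> \<or> x < -\<rho>" by auto
  have e1: "\<rho> * (\<bar>b\<bar> - \<rho>) = \<rho> * \<bar>b\<bar> - \<rho> * \<rho>" by (simp add: algebra_simps)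
  have e2: "\<rho>^2 = \<rho> * \<rho>" by (simp add: power2_eq_square)
  have bb: "\<rho> * \<bar>b\<bar> \<le> \<rho> * (2 * \<rho>)" using assms(2,3) e1 e2 by linarith
  hence bb2: "\<bar>b\<bar> \<le> 2 * \<rho>" using assms(4) by (rule mult_left_le_imp_le)
  from \<open>x > \<rho> \<or> x < -\<rho>\<close> show False
  proof
    assume x: "x > \<rho>"
    have "(x - \<rho>) * (x + \<rho> + b) > 0" using x bb2 by (intro mult_pos_pos) auto
    moreover have "x^2 + b*x + a = (x - \<rho>) * (x + \<rho> + b) + (\<rho>^2 + \<rho>*b + a)" by (simp add: algebra_simps power2_eq_square)
    moreover have "\<rho>^2 + \<rho>*b + a \<ge> 0" using assms(2) by (smt (verit, best) abs_ge_minus_self right_diff_distrib power2_eq_square mult_left_mono assms(4))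
    ultimately show False using assms by linarith
  next
    assume x: "x < -\<rho>"
    have "(-x - \<rho>) * (-x + \<rho> - b) > 0" using x bb2 by (intro mult_pos_pos) auto
    moreover have "x^2 + b*x + a = (-x - \<rho>) * (-x + \<rho> - b) + (\<rho>^2 - \<rho>*b + a)" by (simp add: algebra_simps power2_eq_square)
    moreover have "\<rho>^2 - \<rho>*b + a \<ge> 0" using assms(2) by (smt (verit, best) abs_ge_self right_diff_distrib power2_eq_square mult_left_mono assms(4))
    ultimately show False using assms by linarith
  qed
qed



lemma roots_lt_iff:
  fixes a b :: real
  shows "(\<forall>z::complex. z^2 + of_real b * z + of_real a = 0 \<longrightarrow> cmod z < 1) \<longleftrightarrow> (b, a) \<in> Delta"
proof
  assume H: "\<forall>z::complex. z^2 + of_real b * z + of_real a = 0 \<longrightarrow> cmod z < 1"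
  show "(b, a) \<in> Delta"
  proof (cases rule: two_roots[of b a])
    case 1
    let ?z = "Complex (-b/2) (sqrt (4*a - b^2)/2)"
    have Im: "Im ?z \<noteq> 0" using 1(1) by simp
    from root_cases[OF 1(2)] Im have c: "(cmod ?z)^2 = a" by auto
    have lt: "cmod ?z < 1" using 1(2) by (rule mp[OF spec[OF H]])
    have "(cmod ?z)^2 < 1^2" using lt by (intro power_strict_mono) auto
    hence a1: "a < 1" using c by simp
    have a0: "a > 0" using 1(1) zero_le_power2[of b] by linarith
    have "(a - 1)^2 \<ge> 0" by simp
    hence "4 * a \<le> (a + 1)^2" by (simp add: power2_eq_square algebra_simps)
    hence "\<bar>b\<bar>^2 < (a + 1)^2" using 1(1) by simp
    hence "\<bar>b\<bar> < a + 1" by (rule power2_less_imp_less) (use a0 in auto)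
    thus ?thesis using a1 unfolding Delta_def by auto
  next
    case (2 r1 r2)
    have "cmod (of_real r1) < 1" using real_root_is_root[OF 2(1)] by (rule mp[OF spec[OF H]])
    moreover have "cmod (of_real r2) < 1" using real_root_is_root[OF 2(2)] by (rule mp[OF spec[OF H]])
    ultimately have r: "\<bar>r1\<bar> < 1" "\<bar>r2\<bar> < 1" by auto
    have "\<bar>r1\<bar> * \<bar>r2\<bar> \<le> \<bar>r1\<bar> * 1" using r by (intro mult_left_mono) auto
    hence "\<bar>r1 * r2\<bar> < 1" using r by (simp add: abs_mult)
    hence a1: "a < 1" using 2(4) by auto
    have p: "(1 - r1) * (1 - r2) > 0" "(1 + r1) * (1 + r2) > 0" using r by (auto intro!: mult_pos_pos)
    have e: "(1 - r1) * (1 - r2) = 1 - (r1 + r2) + r1 * r2" "(1 + r1) * (1 + r2) = 1 + (r1 + r2) + r1 * r2"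
      by (simp add: algebra_simps)+
    have "1 + b + a > 0" using p(1) e(1) 2(3,4) by linarith
    moreover have "1 - b + a > 0" using p(2) e(2) 2(3,4) by linarith
    ultimately have "1 + b + a > 0 \<and> 1 - b + a > 0" by simp
    thus ?thesis using a1 unfolding Delta_def by auto
  qed
next
  assume D: "(b, a) \<in> Delta"
  hence D1: "\<bar>b\<bar> - 1 < a" "a < 1" unfolding Delta_def by auto
  show "\<forall>z::complex. z^2 + of_real b * z + of_real a = 0 \<longrightarrow> cmod z < 1"
  proof (intro allI impI)
    fix z :: complex assume z: "z^2 + of_real b * z + of_real a = 0"
    from root_cases[OF z] show "cmod z < 1"
    proof
      assume "Im z \<noteq> 0 \<and> (cmod z)\<^sup>2 = a \<and> b\<^sup>2 < 4 * a"
      hence "(cmod z)^2 < 1^2" using D1 by simp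
      thus ?thesis by (rule power_less_imp_less_base) simp
    next
      assume "Im z = 0 \<and> (Re z)\<^sup>2 + b * Re z + a = 0 \<and> cmod z = \<bar>Re z\<bar>"
      thus ?thesis using real_root_lt[OF _ D1] by auto
    qed
  qed
qed

lemma roots_le_iff:
  fixes a b \<rho> :: real
  assumes \<rho>: "\<rho> > 0"
  shows "(\<forall>z::complex. z^2 + of_real b * z + of_real a = 0 \<longrightarrow> cmod z \<le> \<rho>) \<longleftrightarrow> (b, a) \<in> Delta_rho \<rho>"
proof
  assume H: "\<forall>z::complex. z^2 + of_real b * z + of_real a = 0 \<longrightarrow> cmod z \<le> \<rho>"
  show "(b, a) \<in> Delta_rho \<rho>"
  proof (cases rule: two_roots[of b a])
    case 1
    let ?z = "Complex (-b/2) (sqrt (4*a - b^2)/2)"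
    have Im: "Im ?z \<noteq> 0" using 1(1) by simp
    from root_cases[OF 1(2)] Im have c: "(cmod ?z)^2 = a" by auto
    have le: "cmod ?z \<le> \<rho>" using 1(2) by (rule mp[OF spec[OF H]])
    have "(cmod ?z)^2 \<le> \<rho>^2" using le by (intro power_mono) auto
    hence a1: "a \<le> \<rho>^2" using c by simp
    have a0: "a > 0" using 1(1) zero_le_power2[of b] by linarith
    have "(a - \<rho>^2)^2 \<ge> 0" by simp
    hence q: "\<rho>^2 * (4 * a) \<le> (a + \<rho>^2)^2" by (simp add: power2_eq_square algebra_simps)
    have "(\<rho> * \<bar>b\<bar>)^2 = \<rho>^2 * b^2" by (simp add: power_mult_distrib)
    also have "\<dots> < \<rho>^2 * (4 * a)" using 1(1) \<rho> by simp
    finally have "(\<rho> * \<bar>b\<bar>)^2 < (a + \<rho>^2)^2" using q by linarith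
    hence "\<rho> * \<bar>b\<bar> < a + \<rho>^2" by (rule power2_less_imp_less) (use a0 in auto)
    hence "\<rho> * (\<bar>b\<bar> - \<rho>) \<le> a" by (simp add: algebra_simps power2_eq_square)
    thus ?thesis using a1 unfolding Delta_rho_def by auto
  next
    case (2 r1 r2)
    have "cmod (of_real r1) \<le> \<rho>" using real_root_is_root[OF 2(1)] by (rule mp[OF spec[OF H]])
    moreover have "cmod (of_real r2) \<le> \<rho>" using real_root_is_root[OF 2(2)] by (rule mp[OF spec[OF H]])
    ultimately have r: "\<bar>r1\<bar> \<le> \<rho>" "\<bar>r2\<bar> \<le> \<rho>" by auto
    have "\<bar>r1\<bar> * \<bar>r2\<bar> \<le> \<rho> * \<rho>" using r by (intro mult_mono) auto
    moreover have "r1*r2 \<le> \<bar>r1\<bar>*\<bar>r2\<bar>" by (metis abs_ge_self abs_mult)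
    ultimately have a1: "a \<le> \<rho>^2" using 2(4) by (simp add: power2_eq_square)
    have p: "(\<rho> - r1) * (\<rho> - r2) \<ge> 0" "(\<rho> + r1) * (\<rho> + r2) \<ge> 0" using r by (auto intro!: mult_nonneg_nonneg)
    have e: "(\<rho> - r1) * (\<rho> - r2) = \<rho>*\<rho> - \<rho> * (r1 + r2) + r1 * r2" "(\<rho> + r1) * (\<rho> + r2) = \<rho>*\<rho> + \<rho> * (r1 + r2) + r1 * r2"
      by (simp add: algebra_simps)+
    have "\<rho> * (r1 + r2) = - (\<rho> * b)" using 2(3) by simp
    hence "\<rho>*\<rho> + \<rho>*b + a \<ge> 0 \<and> \<rho>*\<rho> - \<rho>*b + a \<ge> 0" using p e 2(4) by auto
    hence "\<rho> * \<bar>b\<bar> \<le> a + \<rho>^2" using \<rho> by (simp add: power2_eq_square abs_if)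
    hence "\<rho> * (\<bar>b\<bar> - \<rho>) \<le> a" by (simp add: algebra_simps power2_eq_square)
    thus ?thesis using a1 unfolding Delta_rho_def by auto
  qed
next
  assume D: "(b, a) \<in> Delta_rho \<rho>"
  hence D1: "\<rho> * (\<bar>b\<bar> - \<rho>) \<le> a" "a \<le> \<rho>^2" unfolding Delta_rho_def by auto
  show "\<forall>z::complex. z^2 + of_real b * z + of_real a = 0 \<longrightarrow> cmod z \<le> \<rho>"
  proof (intro allI impI)
    fix z :: complex assume z: "z^2 + of_real b * z + of_real a = 0"
    from root_cases[OF z] show "cmod z \<le> \<rho>"
    proof
      assume "Im z \<noteq> 0 \<and> (cmod z)\<^sup>2 = a \<and> b\<^sup>2 < 4 * a"
      hence "(cmod z)^2 \<le> \<rho>^2" using D1 by simp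
      thus ?thesis by (rule power2_le_imp_le) (use \<rho> in auto)
    next
      assume "Im z = 0 \<and> (Re z)\<^sup>2 + b * Re z + a = 0 \<and> cmod z = \<bar>Re z\<bar>"
      thus ?thesis using real_root_le[OF _ D1 \<rho>] by auto
    qed
  qed
qed



definition Qdiag :: "nat \<Rightarrow> real \<Rightarrow> real \<Rightarrow> real mat" where
  "Qdiag n m L = mat n n (\<lambda>(i,j). if i = j then (if i = 0 then m else L) else 0)"

lemma Qdiag_carrier: "Qdiag n m L \<in> carrier_mat n n" unfolding Qdiag_def by simp

lemma Qdiag_mult:
  assumes x: "x \<in> carrier_vec n"
  shows "Qdiag n m L *\<^sub>v x = vec n (\<lambda>i. (if i = 0 then m else L) * x $ i)"
proof (rule eq_vecI)
  fix i assume "i < dim_vec (vec n (\<lambda>i. (if i = 0 then m else L) * x $ i))"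
  hence i: "i < n" by simp
  have "(Qdiag n m L *\<^sub>v x) $ i = (\<Sum>j\<in>{0..<n}. (if i = j then (if i = 0 then m else L) else 0) * x $ j)"
    using i x unfolding Qdiag_def by (auto simp: scalar_prod_def intro!: sum.cong)
  also have "\<dots> = (\<Sum>j\<in>{0..<n}. if i = j then (if i = 0 then m else L) * x $ j else 0)"
    by (intro sum.cong) auto
  also have "\<dots> = (if i = 0 then m else L) * x $ i" using i by (subst sum.delta') auto
  finally show "(Qdiag n m L *\<^sub>v x) $ i = vec n (\<lambda>i. (if i = 0 then m else L) * x $ i) $ i"
    using i by simp
qed (simp add: Qdiag_def)

lemma Qdiag_unit:
  assumes k: "k < n"
  shows "Qdiag n m L *\<^sub>v unit_vec n k = (if k = 0 then m else L) \<cdot>\<^sub>v unit_vec n k"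
  by (subst Qdiag_mult) (auto intro!: eq_vecI simp: unit_vec_def)

lemma Qdiag_QmL:
  assumes m: "0 < m" "m \<le> L" and n: "1 \<le> n" "2 \<le> n \<or> m = L"
  shows "in_QmL n m L (Qdiag n m L)"
proof -
  let ?Q = "Qdiag n m L"
  let ?d = "\<lambda>i::nat. if i = 0 then m else L"
  have dpos: "?d i > 0" for i using m by auto
  have sym: "transpose_mat ?Q = ?Q" unfolding Qdiag_def by (intro eq_matI) auto
  have pd: "x \<bullet> (?Q *\<^sub>v x) > 0" if x: "x \<in> carrier_vec n" "x \<noteq> 0\<^sub>v n" for x
  proof -
    obtain i where i: "i < n" "x $ i \<noteq> 0"
      using x by (metis carrier_vecD eq_vecI index_zero_vec(1) index_zero_vec(2))
    have "x \<bullet> (?Q *\<^sub>v x) = (\<Sum>j\<in>{0..<n}. ?d j * (x $ j)^2)"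
      unfolding Qdiag_mult[OF x(1)] using x(1)
      by (auto simp: scalar_prod_def power2_eq_square ac_simps intro!: sum.cong)
    also have "\<dots> > 0"
    proof (rule sum_pos2[of _ i])
      show "0 < ?d i * (x $ i)^2" using i dpos[of i] by simp
      show "\<And>j. j \<in> {0..<n} \<Longrightarrow> 0 \<le> ?d j * (x $ j)^2" using dpos by (simp add: less_imp_le)
    qed (use i in auto)
    finally show ?thesis .
  qed
  have ev0: "eigenvalue ?Q m"
    unfolding eigenvalue_def eigenvector_def
    using n Qdiag_unit[of 0 n m L] Qdiag_carrier[of n m L]
    by (intro exI[of _ "unit_vec n 0"]) (auto simp: unit_vec_nonzero)
  have evL: "eigenvalue ?Q L"
  proof (cases "2 \<le> n")
    case True
    thus ?thesis unfolding eigenvalue_def eigenvector_def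
      using Qdiag_unit[of 1 n m L] Qdiag_carrier[of n m L]
      by (intro exI[of _ "unit_vec n 1"]) (auto simp: unit_vec_nonzero)
  next
    case False
    thus ?thesis using n ev0 by auto
  qed
  have evall: "m \<le> e \<and> e \<le> L" if e: "eigenvalue ?Q e" for e
  proof -
    from e obtain x where x: "x \<in> carrier_vec n" "x \<noteq> 0\<^sub>v n" "?Q *\<^sub>v x = e \<cdot>\<^sub>v x"
      unfolding eigenvalue_def eigenvector_def using Qdiag_carrier[of n m L] by auto
    obtain i where i: "i < n" "x $ i \<noteq> 0"
      using x by (metis carrier_vecD eq_vecI index_zero_vec(1) index_zero_vec(2))
    have "(?Q *\<^sub>v x) $ i = (e \<cdot>\<^sub>v x) $ i" using x(3) by simp
    hence "?d i * x $ i = e * x $ i" unfolding Qdiag_mult[OF x(1)] using i x(1) by simp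
    hence "e = ?d i" using i by simp
    thus ?thesis using m by auto
  qed
  show ?thesis unfolding in_QmL_def using Qdiag_carrier sym pd ev0 evL evall by blast
qed

lemma conv_lt: "0 \<le> s \<Longrightarrow> s \<le> 1 \<Longrightarrow> X < 0 \<Longrightarrow> Y < 0 \<Longrightarrow> (1 - s) * X + s * Y < (0::real)"
proof -
  assume h: "0 \<le> s" "s \<le> 1" "X < 0" "Y < 0"
  show ?thesis
  proof (cases "s = 0")
    case True thus ?thesis using h by simp
  next
    case False
    hence "s * Y < 0" using h by (simp add: mult_pos_neg)
    moreover have "(1 - s) * X \<le> 0" using h by (simp add: mult_nonneg_nonpos)
    ultimately show ?thesis by linarith
  qed
qed

lemma conv_le: "0 \<le> s \<Longrightarrow> s \<le> 1 \<Longrightarrow> X \<le> 0 \<Longrightarrow> Y \<le> 0 \<Longrightarrow> (1 - s) * X + s * Y \<le> (0::real)"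
  by (simp add: add_nonpos_nonpos mult_nonneg_nonpos)

lemma interp:
  fixes a b :: "real \<Rightarrow> real"
  assumes a: "\<And>t. a t = p0 + p1 * t" and b: "\<And>t. b t = q0 + q1 * t"
    and t: "m \<le> t" "t \<le> L"
  obtains s where "0 \<le> s" "s \<le> 1" "a t = (1 - s) * a m + s * a L" "b t = (1 - s) * b m + s * b L"
proof (cases "m = L")
  case True
  hence "t = m" using t by simp
  thus ?thesis using that[of 0] by simp
next
  case False
  hence mL: "m < L" using t by simp
  define s where "s = (t - m) / (L - m)"
  have s: "0 \<le> s" "s \<le> 1" unfolding s_def using t mL by (auto simp: field_simps)
  have h: "s * (L - m) = t - m" unfolding s_def using mL by simp
  have "(1 - s) * m + s * L = m + s * (L - m)" by (simp add: algebra_simps)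
  hence ts: "t = (1 - s) * m + s * L" using h by simp
  have "a t = (1 - s) * a m + s * a L" unfolding a ts by (simp add: algebra_simps)
  moreover have "b t = (1 - s) * b m + s * b L" unfolding b ts by (simp add: algebra_simps)
  ultimately show ?thesis using that s by blast
qed

lemma abs_conv: "0 \<le> s \<Longrightarrow> s \<le> 1 \<Longrightarrow> \<bar>(1 - s) * x + s * y\<bar> \<le> (1 - s) * \<bar>x\<bar> + s * \<bar>y\<bar>"
  for x y s :: real
proof -
  assume s: "0 \<le> s" "s \<le> 1"
  have "\<bar>(1 - s) * x + s * y\<bar> \<le> \<bar>(1 - s) * x\<bar> + \<bar>s * y\<bar>" by (rule abs_triangle_ineq)
  also have "\<dots> = (1 - s) * \<bar>x\<bar> + s * \<bar>y\<bar>" using s by (simp add: abs_mult)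
  finally show ?thesis .
qed

lemma Delta_conv:
  fixes a b :: "real \<Rightarrow> real"
  assumes a: "\<And>t. a t = p0 + p1 * t" and b: "\<And>t. b t = q0 + q1 * t" and mL: "m \<le> L"
  shows "(\<forall>t\<in>{m..L}. (b t, a t) \<in> Delta) \<longleftrightarrow> (\<forall>t\<in>{m, L}. (b t, a t) \<in> Delta)"
proof
  assume "\<forall>t\<in>{m..L}. (b t, a t) \<in> Delta"
  thus "\<forall>t\<in>{m, L}. (b t, a t) \<in> Delta" using mL by auto
next
  assume H: "\<forall>t\<in>{m, L}. (b t, a t) \<in> Delta"
  hence Hm: "\<bar>b m\<bar> - 1 < a m" "a m < 1" and HL: "\<bar>b L\<bar> - 1 < a L" "a L < 1"
    unfolding Delta_def by auto
  show "\<forall>t\<in>{m..L}. (b t, a t) \<in> Delta"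
  proof
    fix t assume "t \<in> {m..L}"
    hence tmL: "m \<le> t" "t \<le> L" by auto
    obtain s where s: "0 \<le> s" "s \<le> 1" "a t = (1 - s) * a m + s * a L" "b t = (1 - s) * b m + s * b L"
      using interp[OF a b, where m=m and t=t and L=L] tmL by blast
    have ab: "\<bar>b t\<bar> \<le> (1 - s) * \<bar>b m\<bar> + s * \<bar>b L\<bar>" unfolding s(4) using abs_conv[OF s(1,2)] .
    have c1: "(1 - s) * (a m - 1) + s * (a L - 1) < 0" by (rule conv_lt[OF s(1,2)]) (use Hm HL in auto)
    have c2: "(1 - s) * (\<bar>b m\<bar> - 1 - a m) + s * (\<bar>b L\<bar> - 1 - a L) < 0"
      by (rule conv_lt[OF s(1,2)]) (use Hm HL in auto)
    have e1: "(1 - s) * (a m - 1) + s * (a L - 1) = a t - 1" unfolding s(3) by (simp add: algebra_simps)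
    have e2: "(1 - s) * (\<bar>b m\<bar> - 1 - a m) + s * (\<bar>b L\<bar> - 1 - a L) = (1 - s) * \<bar>b m\<bar> + s * \<bar>b L\<bar> - 1 - a t"
      unfolding s(3) by (simp add: algebra_simps)
    have "a t < 1" using c1 e1 by linarith
    moreover have "\<bar>b t\<bar> - 1 < a t" using c2 e2 ab by linarith
    ultimately show "(b t, a t) \<in> Delta" unfolding Delta_def by simp
  qed
qed

lemma Delta_rho_conv:
  fixes a b :: "real \<Rightarrow> real"
  assumes a: "\<And>t. a t = p0 + p1 * t" and b: "\<And>t. b t = q0 + q1 * t" and mL: "m \<le> L" and \<rho>: "\<rho> > 0"
  shows "(\<forall>t\<in>{m..L}. (b t, a t) \<in> Delta_rho \<rho>) \<longleftrightarrow> (\<forall>t\<in>{m, L}. (b t, a t) \<in> Delta_rho \<rho>)"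
proof
  assume "\<forall>t\<in>{m..L}. (b t, a t) \<in> Delta_rho \<rho>"
  thus "\<forall>t\<in>{m, L}. (b t, a t) \<in> Delta_rho \<rho>" using mL by auto
next
  assume H: "\<forall>t\<in>{m, L}. (b t, a t) \<in> Delta_rho \<rho>"
  hence Hm: "\<rho> * (\<bar>b m\<bar> - \<rho>) \<le> a m" "a m \<le> \<rho>^2" and HL: "\<rho> * (\<bar>b L\<bar> - \<rho>) \<le> a L" "a L \<le> \<rho>^2"
    unfolding Delta_rho_def by auto
  show "\<forall>t\<in>{m..L}. (b t, a t) \<in> Delta_rho \<rho>"
  proof
    fix t assume "t \<in> {m..L}"
    hence tmL: "m \<le> t" "t \<le> L" by auto
    obtain s where s: "0 \<le> s" "s \<le> 1" "a t = (1 - s) * a m + s * a L" "b t = (1 - s) * b m + s * b L"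
      using interp[OF a b, where m=m and t=t and L=L] tmL by blast
    have ab: "\<bar>b t\<bar> \<le> (1 - s) * \<bar>b m\<bar> + s * \<bar>b L\<bar>" unfolding s(4) using abs_conv[OF s(1,2)] .
    have c1: "(1 - s) * (a m - \<rho>^2) + s * (a L - \<rho>^2) \<le> 0" by (rule conv_le[OF s(1,2)]) (use Hm HL in auto)
    have c2: "(1 - s) * (\<rho> * \<bar>b m\<bar> - \<rho>^2 - a m) + s * (\<rho> * \<bar>b L\<bar> - \<rho>^2 - a L) \<le> 0"
      by (rule conv_le[OF s(1,2)]) (use Hm HL in \<open>auto simp: algebra_simps power2_eq_square\<close>)
    have e1: "(1 - s) * (a m - \<rho>^2) + s * (a L - \<rho>^2) = a t - \<rho>^2" unfolding s(3) by (simp add: algebra_simps)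
    have e2: "(1 - s) * (\<rho> * \<bar>b m\<bar> - \<rho>^2 - a m) + s * (\<rho> * \<bar>b L\<bar> - \<rho>^2 - a L)
        = \<rho> * ((1 - s) * \<bar>b m\<bar> + s * \<bar>b L\<bar>) - \<rho>^2 - a t"
      unfolding s(3) by (simp add: algebra_simps)
    have ab': "\<rho> * \<bar>b t\<bar> \<le> \<rho> * ((1 - s) * \<bar>b m\<bar> + s * \<bar>b L\<bar>)" using ab \<rho> by (simp add: mult_left_mono)
    have "a t \<le> \<rho>^2" using c1 e1 by linarith
    moreover have "\<rho> * (\<bar>b t\<bar> - \<rho>) = \<rho> * \<bar>b t\<bar> - \<rho>^2" by (simp add: algebra_simps power2_eq_square)
    hence "\<rho> * (\<bar>b t\<bar> - \<rho>) \<le> a t" using c2 e2 ab' by linarith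
    ultimately show "(b t, a t) \<in> Delta_rho \<rho>" unfolding Delta_rho_def by simp
  qed
qed



lemma M_carrier: "Q \<in> carrier_mat n n \<Longrightarrow>
   map_mat complex_of_real (momentum_matrix n \<alpha> \<beta> \<gamma> Q) \<in> carrier_mat (n+n) (n+n)"
  unfolding momentum_matrix_def by auto

lemma sr_attained:
  assumes "Q \<in> carrier_mat n n" "1 \<le> n"
  shows "\<exists>z. eigenvalue (map_mat complex_of_real (momentum_matrix n \<alpha> \<beta> \<gamma> Q)) z \<and>
     spectral_radius (map_mat complex_of_real (momentum_matrix n \<alpha> \<beta> \<gamma> Q)) = cmod z"
  using spectral_radius_mem_max(1)[OF M_carrier[OF assms(1)], of \<alpha> \<beta> \<gamma>] assms(2)
  unfolding spectrum_def by auto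

lemma sr_ge:
  assumes "Q \<in> carrier_mat n n" "1 \<le> n"
    and "eigenvalue (map_mat complex_of_real (momentum_matrix n \<alpha> \<beta> \<gamma> Q)) z"
  shows "cmod z \<le> spectral_radius (map_mat complex_of_real (momentum_matrix n \<alpha> \<beta> \<gamma> Q))"
proof -
  have "cmod z \<in> norm ` spectrum (map_mat complex_of_real (momentum_matrix n \<alpha> \<beta> \<gamma> Q))"
    using assms(3) unfolding spectrum_def by auto
  from spectral_radius_mem_max(2)[OF M_carrier[OF assms(1)] _ this] assms(2) show ?thesis by auto
qed

lemma eig_vec:
  assumes "eigenvalue (Q :: real mat) l" "Q \<in> carrier_mat n n"
  obtains x where "x \<in> carrier_vec n" "x \<noteq> 0\<^sub>v n" "Q *\<^sub>v x = l \<cdot>\<^sub>v x"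
  using assms unfolding eigenvalue_def eigenvector_def by auto

theorem lemma3:
  fixes n :: nat and m L \<alpha> \<beta> \<gamma> :: real and a b :: "real \<Rightarrow> real"
  assumes "0 < m" and "m \<le> L"
    and "1 \<le> n" and "2 \<le> n \<or> m = L"
    and "\<And>t. a t = \<beta> - \<gamma> * \<alpha> * t"
    and "\<And>t. b t = (1 + \<gamma>) * \<alpha> * t - (1 + \<beta>)"
  shows "(stable_all n m L \<alpha> \<beta> \<gamma> \<longleftrightarrow> (\<forall>t\<in>{m..L}. (b t, a t) \<in> Delta))
       \<and> ((\<forall>t\<in>{m..L}. (b t, a t) \<in> Delta) \<longleftrightarrow> (\<forall>t\<in>{m, L}. (b t, a t) \<in> Delta))
       \<and> (\<forall>\<rho>. 0 < \<rho> \<and> \<rho> < 1 \<longrightarrow>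
            (rate_all n m L \<alpha> \<beta> \<gamma> \<rho> \<longleftrightarrow> (\<forall>t\<in>{m..L}. (b t, a t) \<in> Delta_rho \<rho>))
          \<and> ((\<forall>t\<in>{m..L}. (b t, a t) \<in> Delta_rho \<rho>) \<longleftrightarrow>
             (\<forall>t\<in>{m, L}. (b t, a t) \<in> Delta_rho \<rho>)))"
proof -
  note mL = assms(2) and n1 = assms(3)
  have aff_a: "\<And>t. a t = \<beta> + (- (\<gamma> * \<alpha>)) * t" using assms(5) by simp
  have aff_b: "\<And>t. b t = (- (1 + \<beta>)) + ((1 + \<gamma>) * \<alpha>) * t" using assms(6) by (simp add: algebra_simps)
  have rootab: "(z^2 + of_real ((1+\<gamma>)*\<alpha>*l - (1+\<beta>)) * z + of_real (\<beta> - \<gamma>*\<alpha>*l) = 0) \<longleftrightarrow>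
      (z^2 + of_real (b l) * z + of_real (a l) = 0)" for z :: complex and l
    using assms(5,6) by simp
  define Q0 where "Q0 = Qdiag n m L"
  have Q0: "in_QmL n m L Q0" unfolding Q0_def using Qdiag_QmL assms(1-4) by blast
  have Q0c: "Q0 \<in> carrier_mat n n" using Q0 unfolding in_QmL_def by simp
  have Q0ev: "eigenvalue Q0 m" "eigenvalue Q0 L" using Q0 unfolding in_QmL_def by auto
  have root_ev: "eigenvalue (map_mat complex_of_real (momentum_matrix n \<alpha> \<beta> \<gamma> Q0)) z"
    if l: "l \<in> {m, L}" and z: "z^2 + of_real (b l) * z + of_real (a l) = 0" for l z
  proof -
    have "eigenvalue Q0 l" using l Q0ev by auto
    then obtain x where x: "x \<in> carrier_vec n" "x \<noteq> 0\<^sub>v n" "Q0 *\<^sub>v x = l \<cdot>\<^sub>v x"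
      using eig_vec Q0c by blast
    show ?thesis by (rule root_eig_M[OF Q0c x]) (use z rootab in auto)
  qed
  have ev_root: "\<exists>l\<in>{m..L}. z^2 + of_real (b l) * z + of_real (a l) = 0"
    if Q: "in_QmL n m L Q" and ev: "eigenvalue (map_mat complex_of_real (momentum_matrix n \<alpha> \<beta> \<gamma> Q)) z" for Q z
    using eig_M_root[OF Q ev] rootab by auto
  have part1: "stable_all n m L \<alpha> \<beta> \<gamma> \<longleftrightarrow> (\<forall>t\<in>{m..L}. (b t, a t) \<in> Delta)"
  proof
    assume st: "stable_all n m L \<alpha> \<beta> \<gamma>"
    have sr: "spectral_radius (map_mat complex_of_real (momentum_matrix n \<alpha> \<beta> \<gamma> Q0)) < 1"
      using st Q0 unfolding stable_all_def by blast
    have "(b l, a l) \<in> Delta" if l: "l \<in> {m, L}" for l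
      unfolding roots_lt_iff[symmetric]
    proof (intro allI impI)
      fix z :: complex assume z: "z^2 + of_real (b l) * z + of_real (a l) = 0"
      show "cmod z < 1" using sr_ge[OF Q0c n1 root_ev[OF l z]] sr by linarith
    qed
    thus "\<forall>t\<in>{m..L}. (b t, a t) \<in> Delta" using Delta_conv[OF aff_a aff_b mL] by blast
  next
    assume D: "\<forall>t\<in>{m..L}. (b t, a t) \<in> Delta"
    show "stable_all n m L \<alpha> \<beta> \<gamma>" unfolding stable_all_def
    proof (intro allI impI)
      fix Q assume Q: "in_QmL n m L Q"
      have Qc: "Q \<in> carrier_mat n n" using Q unfolding in_QmL_def by simp
      obtain z where z: "eigenvalue (map_mat complex_of_real (momentum_matrix n \<alpha> \<beta> \<gamma> Q)) z"
        "spectral_radius (map_mat complex_of_real (momentum_matrix n \<alpha> \<beta> \<gamma> Q)) = cmod z"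
        using sr_attained[OF Qc n1] by blast
      obtain l where l: "l \<in> {m..L}" "z^2 + of_real (b l) * z + of_real (a l) = 0"
        using ev_root[OF Q z(1)] by blast
      have "cmod z < 1" using roots_lt_iff[of "b l" "a l"] D l by blast
      thus "spectral_radius (map_mat complex_of_real (momentum_matrix n \<alpha> \<beta> \<gamma> Q)) < 1" using z(2) by simp
    qed
  qed
  have part3: "rate_all n m L \<alpha> \<beta> \<gamma> \<rho> \<longleftrightarrow> (\<forall>t\<in>{m..L}. (b t, a t) \<in> Delta_rho \<rho>)"
    if \<rho>: "0 < \<rho>" for \<rho>
  proof
    assume st: "rate_all n m L \<alpha> \<beta> \<gamma> \<rho>"
    have sr: "spectral_radius (map_mat complex_of_real (momentum_matrix n \<alpha> \<beta> \<gamma> Q0)) \<le> \<rho>"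
      using st Q0 unfolding rate_all_def by blast
    have "(b l, a l) \<in> Delta_rho \<rho>" if l: "l \<in> {m, L}" for l
      unfolding roots_le_iff[OF \<rho>, symmetric]
    proof (intro allI impI)
      fix z :: complex assume z: "z^2 + of_real (b l) * z + of_real (a l) = 0"
      show "cmod z \<le> \<rho>" using sr_ge[OF Q0c n1 root_ev[OF l z]] sr by linarith
    qed
    thus "\<forall>t\<in>{m..L}. (b t, a t) \<in> Delta_rho \<rho>" using Delta_rho_conv[OF aff_a aff_b mL \<rho>] by blast
  next
    assume D: "\<forall>t\<in>{m..L}. (b t, a t) \<in> Delta_rho \<rho>"
    show "rate_all n m L \<alpha> \<beta> \<gamma> \<rho>" unfolding rate_all_def
    proof (intro allI impI)
      fix Q assume Q: "in_QmL n m L Q"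
      have Qc: "Q \<in> carrier_mat n n" using Q unfolding in_QmL_def by simp
      obtain z where z: "eigenvalue (map_mat complex_of_real (momentum_matrix n \<alpha> \<beta> \<gamma> Q)) z"
        "spectral_radius (map_mat complex_of_real (momentum_matrix n \<alpha> \<beta> \<gamma> Q)) = cmod z"
        using sr_attained[OF Qc n1] by blast
      obtain l where l: "l \<in> {m..L}" "z^2 + of_real (b l) * z + of_real (a l) = 0"
        using ev_root[OF Q z(1)] by blast
      have "cmod z \<le> \<rho>" using roots_le_iff[OF \<rho>, of "b l" "a l"] D l by blast
      thus "spectral_radius (map_mat complex_of_real (momentum_matrix n \<alpha> \<beta> \<gamma> Q)) \<le> \<rho>" using z(2) by simp
    qed
  qed
  show ?thesis
    using part1 part3 Delta_conv[OF aff_a aff_b mL] Delta_rho_conv[OF aff_a aff_b mL] by blast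
qed

end
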